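(* Under the triangle scaling property with constant $G\ge1$, the iterates of acc-BPP3 satisfy, for every $k\ge0$ and every $\lambda\in\Lambda$, $$d(\lambda)-d(\lambda_{k+1})\le\frac{G\,D_h(\lambda,\lambda_0)}{S_k}=\frac{\theta_k^2\,G\,D_h(\lambda,\lambda_0)}{\eta_k},\qquad S_k=\sum_{j=0}^k\frac{\eta_j}{\theta_j}.$$
   Context: $\Lambda\subseteq\mathbb{R}^m$ closed convex, $d:\Lambda\to\mathbb{R}$ concave. $h$ strictly convex, continuously differentiable on $\Lambda$, $D_h(\lambda,\tilde\lambda)=h(\lambda)-h(\tilde\lambda)-\nabla h(\tilde\lambda)^\top(\lambda-\tilde\lambda)$. Triangle scaling property with constant $G$: $D_h((1-\theta)\lambda+\theta\lambda_1,(1-\theta)\lambda+\theta\lambda_2)\le G\theta^2D_h(\lambda_1,\lambda_2)$ for all $\lambda,\lambda_1,\lambda_2\in\Lambda$, $\theta\in[0,1]$. Algorithm acc-BPP3: given $\lambda_0\in\Lambda$, $v_0=\lambda_0$, $\theta_0=1$, $\eta_k>0$; for $k\ge0$: $y_k=\theta_kv_k+(1-\theta_k)\lambda_k$; $\lambda_{k+1}\in\arg\max_{\lambda\in\Lambda}\{d(\lambda)-\frac1{\eta_k}D_h(\lambda,y_k)\}$; $v_{k+1}\in\arg\max_{\lambda\in\Lambda}\big\{-GD_h(\lambda,\lambda_0)+\sum_{j=0}^k\frac{\eta_j}{\theta_j}\big(d(\lambda_{j+1})+\frac1{\eta_j}(\nabla h(\lambda_{j+1})-\nabla h(y_j))^\top(\lambda-\lambda_{j+1})\big)\big\}$;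 $\theta_{k+1}\in(0,1]$ is defined by $\frac{\eta_k}{\theta_k^2}=\frac{\eta_{k+1}}{\theta_{k+1}^2}-\frac{\eta_{k+1}}{\theta_{k+1}}$. All maximizers are assumed to exist. *)

theory Defs
  imports "HOL-Analysis.Analysis"
begin

definition strictly_convex_on :: "'a::real_vector set \<Rightarrow> ('a \<Rightarrow> real) \<Rightarrow> bool" where
  "strictly_convex_on S f \<longleftrightarrow> (\<forall>x\<in>S. \<forall>y\<in>S. x \<noteq> y \<longrightarrow>
     (\<forall>t::real. 0 < t \<and> t < 1 \<longrightarrow> f ((1 - t) *\<^sub>R x + t *\<^sub>R y) < (1 - t) * f x + t * f y))"

definition bregman :: "('a::real_inner \<Rightarrow> real) \<Rightarrow> ('a \<Rightarrow> 'a) \<Rightarrow> 'a \<Rightarrow> 'a \<Rightarrow> real" where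
  "bregman h gh x y = h x - h y - inner (gh y) (x - y)"

end

theory Submission
  imports Defs
begin

lemma dq_lim:
  fixes h :: "'a::real_inner \<Rightarrow> real"
  assumes hd: "(h has_derivative (\<lambda>u. inner u g)) (at x within S)"
    and cS: "convex S" and xS: "x \<in> S" and zS: "z \<in> S"
  shows "((\<lambda>t. (h (x + t *\<^sub>R (z - x)) - h x) / t) \<longlongrightarrow> inner (z - x) g) (at_right 0)"
proof -
  define p where "p = (\<lambda>t::real. x + t *\<^sub>R (z - x))"
  have pd: "(p has_derivative (\<lambda>t. t *\<^sub>R (z - x))) (at 0 within {0..1})"
    unfolding p_def by (auto intro!: derivative_eq_intros)
  have sub: "p ` {0..1} \<subseteq> S"
  proof
    fix w assume "w \<in> p ` {0..1}"
    then obtain t where t: "0 \<le> t" "t \<le> 1" "w = p t" by auto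
    have "w = (1 - t) *\<^sub>R x + t *\<^sub>R z" using t by (simp add: p_def algebra_simps)
    then show "w \<in> S" using cS xS zS t by (simp add: convex_alt)
  qed
  have "p 0 = x" by (simp add: p_def)
  then have hd': "(h has_derivative (\<lambda>u. inner u g)) (at (p 0) within p ` {0..1})"
    using has_derivative_subset[OF hd sub] by simp
  have "((h \<circ> p) has_derivative ((\<lambda>u. inner u g) \<circ> (\<lambda>t. t *\<^sub>R (z - x)))) (at 0 within {0..1})"
    by (rule diff_chain_within[OF pd hd'])
  then have "((h \<circ> p) has_derivative (\<lambda>t. t * inner (z - x) g)) (at 0 within {0..1})"
    by (simp add: o_def)
  then have "((h \<circ> p) has_field_derivative inner (z - x) g) (at 0 within {0..1})"
    proof -
    assume a: "((h \<circ> p) has_derivative (\<lambda>t. t * inner (z - x) g)) (at 0 within {0..1})"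
    have e: "(*) (inner (z - x) g) = (\<lambda>t. t * inner (z - x) g)" by (auto simp: mult.commute)
    show ?thesis unfolding has_field_derivative_def e by (rule a)
  qed
  then have "((\<lambda>t. ((h \<circ> p) t - (h \<circ> p) 0) / (t - 0)) \<longlongrightarrow> inner (z - x) g) (at 0 within {0..1})"
    by (simp add: has_field_derivative_iff)
  then show ?thesis by (simp add: at_within_Icc_at_right p_def)
qed

lemma dq_lower:
  fixes h :: "'a::real_inner \<Rightarrow> real"
  assumes hd: "(h has_derivative (\<lambda>u. inner u g)) (at x within S)"
    and cS: "convex S" and xS: "x \<in> S" and zS: "z \<in> S"
    and b: "\<And>t. 0 < t \<Longrightarrow> t \<le> 1 \<Longrightarrow> a \<le> (h (x + t *\<^sub>R (z - x)) - h x) / t"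
  shows "a \<le> inner (z - x) g"
proof (rule tendsto_lowerbound[OF dq_lim[OF hd cS xS zS]])
  show "\<forall>\<^sub>F t in at_right 0. a \<le> (h (x + t *\<^sub>R (z - x)) - h x) / t"
    unfolding eventually_at_right_field by (rule exI[of _ 1]) (auto intro: b)
qed simp

lemma dq_upper:
  fixes h :: "'a::real_inner \<Rightarrow> real"
  assumes hd: "(h has_derivative (\<lambda>u. inner u g)) (at x within S)"
    and cS: "convex S" and xS: "x \<in> S" and zS: "z \<in> S"
    and b: "\<And>t. 0 < t \<Longrightarrow> t \<le> 1 \<Longrightarrow> (h (x + t *\<^sub>R (z - x)) - h x) / t \<le> a"
  shows "inner (z - x) g \<le> a"
proof (rule tendsto_upperbound[OF dq_lim[OF hd cS xS zS]])
  show "\<forall>\<^sub>F t in at_right 0. (h (x + t *\<^sub>R (z - x)) - h x) / t \<le> a"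
    unfolding eventually_at_right_field by (rule exI[of _ 1]) (auto intro: b)
qed simp

lemma bregman_nonneg:
  fixes h :: "'a::real_inner \<Rightarrow> real"
  assumes hs: "strictly_convex_on S h" and cS: "convex S"
    and hgrad: "\<And>x. x \<in> S \<Longrightarrow> (h has_derivative (\<lambda>u. inner u (gh x))) (at x within S)"
    and xS: "x \<in> S" and yS: "y \<in> S"
  shows "bregman h gh x y \<ge> 0"
proof -
  have "inner (x - y) (gh y) \<le> h x - h y"
  proof (rule dq_upper[OF hgrad[OF yS] cS yS xS])
    fix t :: real assume t: "0 < t" "t \<le> 1"
    have "h (y + t *\<^sub>R (x - y)) \<le> (1 - t) * h y + t * h x"
    proof (cases "x = y \<or> t = 1")
      case True then show ?thesis by (auto simp: algebra_simps)
    next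
      case False
      then have "h ((1 - t) *\<^sub>R y + t *\<^sub>R x) < (1 - t) * h y + t * h x"
        using hs xS yS t unfolding strictly_convex_on_def by auto
      moreover have "(1 - t) *\<^sub>R y + t *\<^sub>R x = y + t *\<^sub>R (x - y)" by (simp add: algebra_simps)
      ultimately show ?thesis by simp
    qed
    then have "h (y + t *\<^sub>R (x - y)) - h y \<le> t * (h x - h y)" by (simp add: algebra_simps)
    then show "(h (y + t *\<^sub>R (x - y)) - h y) / t \<le> h x - h y" using t
      by (simp add: divide_le_eq mult.commute)
  qed
  then show ?thesis unfolding bregman_def by (simp add: inner_commute)
qed

lemma three_point:
  "inner (gh a - gh b) (c - a) = bregman h gh c b - bregman h gh c a - bregman h gh a b"
  unfolding bregman_def by (simp add: inner_diff_left inner_diff_right algebra_simps)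

lemma prox_opt:
  fixes h d :: "'a::real_inner \<Rightarrow> real"
  assumes cd: "concave_on S d" and cS: "convex S"
    and hgrad: "\<And>x. x \<in> S \<Longrightarrow> (h has_derivative (\<lambda>u. inner u (gh x))) (at x within S)"
    and lS: "lp \<in> S" and mS: "m \<in> S" and eta: "eta > 0"
    and mx: "\<forall>\<nu>\<in>S. d \<nu> - bregman h gh \<nu> y / eta \<le> d lp - bregman h gh lp y / eta"
  shows "d m \<le> d lp + (1 / eta) * inner (gh lp - gh y) (m - lp)"
proof -
  have "eta * (d m - d lp) + inner (gh y) (m - lp) \<le> inner (m - lp) (gh lp)"
  proof (rule dq_lower[OF hgrad[OF lS] cS lS mS])
    fix t :: real assume t: "0 < t" "t \<le> 1"
    define lt where "lt = lp + t *\<^sub>R (m - lp)"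
    have e: "lt = (1 - t) *\<^sub>R lp + t *\<^sub>R m" by (simp add: lt_def algebra_simps)
    have ltS: "lt \<in> S" using cS lS mS t unfolding e by (simp add: convex_alt)
    have c1: "d lt \<ge> (1 - t) * d lp + t * d m" unfolding e using concave_onD[OF cd] t lS mS by simp
    have c2: "d lt - bregman h gh lt y / eta \<le> d lp - bregman h gh lp y / eta" using mx ltS by blast
    have br: "bregman h gh lt y - bregman h gh lp y = h lt - h lp - t * inner (gh y) (m - lp)"
      unfolding bregman_def lt_def by (simp add: inner_diff_right inner_add_right algebra_simps)
    have "t * (d m - d lp) \<le> (bregman h gh lt y - bregman h gh lp y) / eta"
      using c1 c2 by (simp add: diff_divide_distrib algebra_simps)
    then have "eta * (t * (d m - d lp)) \<le> h lt - h lp - t * inner (gh y) (m - lp)"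
      using eta br by (simp add: le_divide_eq mult.commute)
    then have "t * (eta * (d m - d lp) + inner (gh y) (m - lp)) \<le> h lt - h lp"
      by (simp add: algebra_simps)
    then show "eta * (d m - d lp) + inner (gh y) (m - lp) \<le> (h (lp + t *\<^sub>R (m - lp)) - h lp) / t"
      using t unfolding lt_def by (simp add: le_divide_eq mult.commute)
  qed
  moreover have "inner (gh lp - gh y) (m - lp) = inner (m - lp) (gh lp) - inner (gh y) (m - lp)"
    by (metis inner_commute inner_diff_left)
  ultimately have "eta * (d m - d lp) \<le> inner (gh lp - gh y) (m - lp)"
    by linarith
  then show ?thesis using eta by (simp add: field_simps)
qed

lemma mirror_opt:
  fixes h :: "'a::real_inner \<Rightarrow> real"
  assumes cS: "convex S" and G: "G > 0"
    and hgrad: "\<And>x. x \<in> S \<Longrightarrow> (h has_derivative (\<lambda>u. inner u (gh x))) (at x within S)"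
    and vS: "v \<in> S" and mS: "m \<in> S"
    and A: "\<And>a b. A a - A b = inner P (a - b)"
    and mx: "\<forall>\<mu>\<in>S. - G * bregman h gh \<mu> l0 + A \<mu> \<le> - G * bregman h gh v l0 + A v"
  shows "- G * bregman h gh m l0 + A m \<le> - G * bregman h gh v l0 + A v - G * bregman h gh m v"
proof -
  have "(inner P (m - v) + G * inner (gh l0) (m - v)) / G \<le> inner (m - v) (gh v)"
  proof (rule dq_lower[OF hgrad[OF vS] cS vS mS])
    fix t :: real assume t: "0 < t" "t \<le> 1"
    define vt where "vt = v + t *\<^sub>R (m - v)"
    have e: "vt = (1 - t) *\<^sub>R v + t *\<^sub>R m" by (simp add: vt_def algebra_simps)
    have vtS: "vt \<in> S" using cS vS mS t unfolding e by (simp add: convex_alt)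
    have c2: "- G * bregman h gh vt l0 + A vt \<le> - G * bregman h gh v l0 + A v" using mx vtS by blast
    have br: "bregman h gh vt l0 - bregman h gh v l0 = h vt - h v - t * inner (gh l0) (m - v)"
      unfolding bregman_def vt_def by (simp add: inner_diff_right inner_add_right algebra_simps)
    have Ad: "A vt - A v = t * inner P (m - v)" unfolding A vt_def by simp
    have "A vt - A v \<le> G * (bregman h gh vt l0 - bregman h gh v l0)"
      using c2 by (simp add: algebra_simps)
    then have "t * inner P (m - v) \<le> G * (h vt - h v - t * inner (gh l0) (m - v))"
      unfolding br Ad .
    then have "t * (inner P (m - v) + G * inner (gh l0) (m - v)) \<le> G * (h vt - h v)"
      by (simp add: algebra_simps)
    then have "t * ((inner P (m - v) + G * inner (gh l0) (m - v)) / G) \<le> h vt - h v"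
      using G by (simp add: field_simps)
    then show "(inner P (m - v) + G * inner (gh l0) (m - v)) / G \<le> (h (v + t *\<^sub>R (m - v)) - h v) / t"
      using t unfolding vt_def by (simp add: le_divide_eq mult.commute)
  qed
  then have k: "inner P (m - v) + G * inner (gh l0) (m - v) \<le> G * inner (m - v) (gh v)"
    using G by (simp add: divide_le_eq mult.commute)
  have "A m - A v = inner P (m - v)" by (rule A)
  moreover have "inner (gh l0) (m - l0) - inner (gh l0) (v - l0) = inner (gh l0) (m - v)"
    by (simp add: inner_diff_right)
  ultimately show ?thesis using k unfolding bregman_def
    by (simp add: inner_commute algebra_simps)
qed

theorem mainTheorem8:
  fixes Lam :: "(real^'m) set"
    and d h :: "real^'m \<Rightarrow> real"
    and gh :: "real^'m \<Rightarrow> real^'m"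
    and G :: real
    and lam v y :: "nat \<Rightarrow> real^'m"
    and theta eta :: "nat \<Rightarrow> real"
  assumes closedL: "closed Lam" and convexL: "convex Lam"
    and concd: "concave_on Lam d"
    and hstrict: "strictly_convex_on Lam h"
    and hgrad: "\<And>x. x \<in> Lam \<Longrightarrow> (h has_derivative (\<lambda>u. inner u (gh x))) (at x within Lam)"
    and hcont: "continuous_on Lam gh"
    and G1: "G \<ge> 1"
    and tsp: "\<And>l l1 l2 t. l \<in> Lam \<Longrightarrow> l1 \<in> Lam \<Longrightarrow> l2 \<in> Lam \<Longrightarrow> 0 \<le> t \<Longrightarrow> t \<le> 1 \<Longrightarrow>
        bregman h gh ((1 - t) *\<^sub>R l + t *\<^sub>R l1) ((1 - t) *\<^sub>R l + t *\<^sub>R l2) \<le> G * t\<^sup>2 * bregman h gh l1 l2"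
    and lam0: "lam 0 \<in> Lam"
    and v0: "v 0 = lam 0"
    and theta0: "theta 0 = 1"
    and eta_pos: "\<And>k. eta k > 0"
    and theta_rng: "\<And>k. 0 < theta k \<and> theta k \<le> 1"
    and theta_rec: "\<And>k. eta k / (theta k)\<^sup>2 = eta (Suc k) / (theta (Suc k))\<^sup>2 - eta (Suc k) / theta (Suc k)"
    and y_def: "\<And>k. y k = theta k *\<^sub>R v k + (1 - theta k) *\<^sub>R lam k"
    and lam_step: "\<And>k. lam (Suc k) \<in> Lam \<and>
        (\<forall>\<mu>\<in>Lam. d \<mu> - bregman h gh \<mu> (y k) / eta k
                 \<le> d (lam (Suc k)) - bregman h gh (lam (Suc k)) (y k) / eta k)"
    and v_step: "\<And>k. v (Suc k) \<in> Lam \<and>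
        (\<forall>\<mu>\<in>Lam.
           - G * bregman h gh \<mu> (lam 0)
             + (\<Sum>j\<le>k. eta j / theta j * (d (lam (Suc j))
                  + (1 / eta j) * inner (gh (lam (Suc j)) - gh (y j)) (\<mu> - lam (Suc j))))
         \<le> - G * bregman h gh (v (Suc k)) (lam 0)
             + (\<Sum>j\<le>k. eta j / theta j * (d (lam (Suc j))
                  + (1 / eta j) * inner (gh (lam (Suc j)) - gh (y j)) (v (Suc k) - lam (Suc j)))))"
  shows "\<forall>k. \<forall>\<mu>\<in>Lam.
           d \<mu> - d (lam (Suc k)) \<le> G * bregman h gh \<mu> (lam 0) / (\<Sum>j\<le>k. eta j / theta j)
         \<and> G * bregman h gh \<mu> (lam 0) / (\<Sum>j\<le>k. eta j / theta j)
             = (theta k)\<^sup>2 * G * bregman h gh \<mu> (lam 0) / eta k"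
proof -
  define ell where "ell j \<mu> = d (lam (Suc j)) + (1 / eta j) * inner (gh (lam (Suc j)) - gh (y j)) (\<mu> - lam (Suc j))" for j \<mu>
  define A where "A k \<mu> = (\<Sum>j\<le>k. eta j / theta j * ell j \<mu>)" for k \<mu>
  define S where "S k = (\<Sum>j\<le>k. eta j / theta j)" for k
  define P where "P k = (\<Sum>j\<le>k. (eta j / theta j * (1 / eta j)) *\<^sub>R (gh (lam (Suc j)) - gh (y j)))" for k
  define B where "B = bregman h gh"
  have S_eq: "S k = eta k / (theta k)\<^sup>2" for k
  proof (induction k)
    case 0 then show ?case by (simp add: S_def theta0)
  next
    case (Suc k)
    have "S (Suc k) = S k + eta (Suc k) / theta (Suc k)" by (simp add: S_def)
    then show ?case using Suc theta_rec[of k] by simp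
  qed
  have Spos: "S k > 0" for k
    unfolding S_eq using eta_pos[of k] theta_rng[of k] by simp
  have lamS: "lam k \<in> Lam" for k
    using lam0 lam_step by (cases k) auto
  have vS: "v k \<in> Lam" for k
    using lam0 v0 v_step by (cases k) auto
  have yS: "y k \<in> Lam" for k
  proof -
    have "y k = (1 - theta k) *\<^sub>R lam k + theta k *\<^sub>R v k" using y_def[of k] by simp
    then show ?thesis using convexL lamS vS theta_rng[of k] by (simp add: convex_alt)
  qed
  have A_diff: "A k a - A k b = inner (P k) (a - b)" for k a b
  proof -
    have "A k a - A k b = (\<Sum>j\<le>k. eta j / theta j * (ell j a - ell j b))"
      by (simp add: A_def sum_subtractf right_diff_distrib)
    also have "\<dots> = (\<Sum>j\<le>k. inner ((eta j / theta j * (1 / eta j)) *\<^sub>R (gh (lam (Suc j)) - gh (y j))) (a - b))"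
      by (rule sum.cong) (simp_all add: ell_def inner_diff_right algebra_simps)
    also have "\<dots> = inner (P k) (a - b)" by (simp add: P_def inner_sum_left)
    finally show ?thesis .
  qed
  have ell_ge: "d \<mu> \<le> ell j \<mu>" if "\<mu> \<in> Lam" for j \<mu>
    unfolding ell_def
    using prox_opt[OF concd convexL hgrad lamS[of "Suc j"] that eta_pos[of j]] lam_step[of j] by blast
  have Bnn: "B a b \<ge> 0" if "a \<in> Lam" "b \<in> Lam" for a b
    unfolding B_def using bregman_nonneg[OF hstrict convexL hgrad that] .
  have vopt: "- G * B \<mu> (lam 0) + A k \<mu> \<le> - G * B (v (Suc k)) (lam 0) + A k (v (Suc k)) - G * B \<mu> (v (Suc k))"
    if "\<mu> \<in> Lam" for k \<mu>
  proof -
    have "G > 0" using G1 by simp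
    have mx: "\<forall>\<mu>\<in>Lam. - G * bregman h gh \<mu> (lam 0) + A k \<mu> \<le> - G * bregman h gh (v (Suc k)) (lam 0) + A k (v (Suc k))"
      unfolding A_def ell_def by (rule conjunct2[OF v_step[of k]])
    show ?thesis unfolding B_def
      using mirror_opt[OF convexL \<open>G > 0\<close> hgrad vS that A_diff mx] by blast
  qed
  have main: "\<forall>\<mu>\<in>Lam. - G * B \<mu> (lam 0) + A k \<mu> \<le> S k * d (lam (Suc k))" for k
  proof (induction k)
    case 0
    show ?case
    proof
      fix \<mu> assume mS: "\<mu> \<in> Lam"
      have y0: "y 0 = lam 0" using y_def[of 0] theta0 v0 by simp
      have A0: "A 0 \<mu> = eta 0 * d (lam 1) + inner (gh (lam 1) - gh (lam 0)) (\<mu> - lam 1)"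
        using eta_pos[of 0] by (simp add: A_def ell_def theta0 y0 algebra_simps)
      have tp: "inner (gh (lam 1) - gh (lam 0)) (\<mu> - lam 1) = B \<mu> (lam 0) - B \<mu> (lam 1) - B (lam 1) (lam 0)"
        unfolding B_def by (rule three_point)
      have "B \<mu> (lam 1) \<ge> 0" "B (lam 1) (lam 0) \<ge> 0" "B \<mu> (lam 0) \<ge> 0"
        using Bnn mS lamS by auto
      moreover have "G * B \<mu> (lam 0) \<ge> 1 * B \<mu> (lam 0)"
        using G1 \<open>B \<mu> (lam 0) \<ge> 0\<close> by (intro mult_right_mono) auto
      ultimately show "- G * B \<mu> (lam 0) + A 0 \<mu> \<le> S 0 * d (lam (Suc 0))"
        using A0 tp by (simp add: S_def theta0)
    qed
  next
    case (Suc k)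
    show ?case
    proof
      fix \<mu> assume mS: "\<mu> \<in> Lam"
      define th where "th = theta (Suc k)"
      define a where "a = eta (Suc k) / th"
      define S' where "S' = S (Suc k)"
      define lk where "lk = lam (Suc k)"
      define vk where "vk = v (Suc k)"
      define z where "z = (1 - th) *\<^sub>R lk + th *\<^sub>R \<mu>"
      have th: "0 < th" "th \<le> 1" using theta_rng unfolding th_def by auto
      have et: "eta (Suc k) > 0" by (rule eta_pos)
      have St: "S' * th = eta (Suc k) / th"
        unfolding S'_def S_eq th_def using th by (simp add: th_def power2_eq_square)
      have Sk: "S k = S' * (1 - th)"
      proof -
        have "S k = S' - eta (Suc k) / th"
          using theta_rec[of k] unfolding S_eq S'_def th_def by simp
        then show ?thesis using St by (simp add: algebra_simps)
      qed
      have aS: "a = S' * th" unfolding a_def S'_def S_eq th_def using th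
        by (simp add: th_def field_simps power2_eq_square)
      have Sth: "S' / eta (Suc k) * th\<^sup>2 = 1"
        unfolding S'_def S_eq th_def using th et by (simp add: th_def field_simps)
      have Ssplit: "- G * B \<mu> (lam 0) + A (Suc k) \<mu> = - G * B \<mu> (lam 0) + A k \<mu> + a * ell (Suc k) \<mu>"
        by (simp add: A_def a_def th_def)
      have i1: "- G * B \<mu> (lam 0) + A k \<mu> \<le> S k * d lk - G * B \<mu> vk"
        using vopt[OF mS, of k] Suc.IH vS[of "Suc k"] unfolding lk_def vk_def by fastforce
      have i2: "d lk \<le> ell (Suc k) lk" using ell_ge lamS unfolding lk_def by blast
      have Sk0: "S k \<ge> 0" using Spos[of k] by simp
      have i3: "S k * d lk \<le> S k * ell (Suc k) lk" using mult_left_mono[OF i2 Sk0] .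
      define g where "g = gh (lam (Suc (Suc k))) - gh (y (Suc k))"
      define lp where "lp = lam (Suc (Suc k))"
      have ellf: "ell (Suc k) x = d lp + (1 / eta (Suc k)) * inner g (x - lp)" for x
        by (simp add: ell_def g_def lp_def)
      have aff: "(1 - th) * inner g (lk - lp) + th * inner g (\<mu> - lp) = inner g (z - lp)"
      proof -
        have "z - lp = (1 - th) *\<^sub>R (lk - lp) + th *\<^sub>R (\<mu> - lp)"
          by (simp add: z_def algebra_simps)
        then show ?thesis by (simp add: inner_add_right)
      qed
      have comb: "S k * ell (Suc k) lk + a * ell (Suc k) \<mu> = S' * ell (Suc k) z"
      proof -
        have "S k * ell (Suc k) lk + a * ell (Suc k) \<mu>
            = S' * (d lp + (1 / eta (Suc k)) * ((1 - th) * inner g (lk - lp) + th * inner g (\<mu> - lp)))"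
        proof -
          have "\<And>p1 p2 c e. S k * (e + c * p1) + a * (e + c * p2) = S' * (e + c * ((1 - th) * p1 + th * p2))"
            unfolding Sk aS by (simp add: algebra_simps)
          then show ?thesis unfolding ellf by blast
        qed
        then show ?thesis unfolding aff ellf .
      qed
      have zS: "z \<in> Lam" unfolding z_def using convexL lamS mS th
        by (simp add: lk_def convex_alt)
      have ySk: "y (Suc k) = (1 - th) *\<^sub>R lk + th *\<^sub>R vk"
        using y_def[of "Suc k"] by (simp add: th_def lk_def vk_def)
      have tp: "inner g (z - lp) = B z (y (Suc k)) - B z lp - B lp (y (Suc k))"
        unfolding B_def g_def lp_def by (rule three_point)
      have "B z lp \<ge> 0" "B lp (y (Suc k)) \<ge> 0" using Bnn zS lamS yS unfolding lp_def by auto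
      then have t1: "inner g (z - lp) \<le> B z (y (Suc k))" using tp by linarith
      have t2: "B z (y (Suc k)) \<le> G * th\<^sup>2 * B \<mu> vk"
        unfolding B_def ySk z_def using tsp[OF lamS[of "Suc k"] mS vS[of "Suc k"]] th
        by (simp add: lk_def vk_def)
      have S'pos: "S' / eta (Suc k) \<ge> 0" using Spos[of "Suc k"] et unfolding S'_def by simp
      have "S' * ell (Suc k) z = S' * d lp + S' / eta (Suc k) * inner g (z - lp)"
        unfolding ellf by (simp add: algebra_simps)
      also have "\<dots> \<le> S' * d lp + S' / eta (Suc k) * (G * th\<^sup>2 * B \<mu> vk)"
        using mult_left_mono[OF order_trans[OF t1 t2] S'pos] by simp
      also have "\<dots> = S' * d lp + G * B \<mu> vk * (S' / eta (Suc k) * th\<^sup>2)"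
        by (simp add: algebra_simps)
      also have "\<dots> = S' * d lp + G * B \<mu> vk" unfolding Sth by simp
      finally have "S' * ell (Suc k) z \<le> S' * d lp + G * B \<mu> vk" .
      then show "- G * B \<mu> (lam 0) + A (Suc k) \<mu> \<le> S (Suc k) * d (lam (Suc (Suc k)))"
        using Ssplit i1 i3 comb unfolding S'_def lp_def by linarith
    qed
  qed
  show ?thesis
  proof (intro allI ballI conjI)
    fix k \<mu> assume mS: "\<mu> \<in> Lam"
    have "S k * d \<mu> = (\<Sum>j\<le>k. eta j / theta j * d \<mu>)" by (simp add: S_def sum_distrib_right)
    also have "\<dots> \<le> A k \<mu>" unfolding A_def
    proof (rule sum_mono)
      fix j assume "j \<in> {..k}"
      have "eta j / theta j \<ge> 0" using eta_pos[of j] theta_rng[of j] by simp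
      then show "eta j / theta j * d \<mu> \<le> eta j / theta j * ell j \<mu>"
        using ell_ge[OF mS] by (rule mult_left_mono[rotated])
    qed
    finally have "S k * (d \<mu> - d (lam (Suc k))) \<le> G * B \<mu> (lam 0)"
    proof -
      assume "S k * d \<mu> \<le> A k \<mu>"
      moreover have "- G * B \<mu> (lam 0) + A k \<mu> \<le> S k * d (lam (Suc k))" using main[of k] mS by blast
      ultimately show ?thesis by (simp add: right_diff_distrib)
    qed
    then have "d \<mu> - d (lam (Suc k)) \<le> G * B \<mu> (lam 0) / S k"
      using Spos[of k] by (simp add: le_divide_eq mult.commute)
    then show "d \<mu> - d (lam (Suc k)) \<le> G * bregman h gh \<mu> (lam 0) / (\<Sum>j\<le>k. eta j / theta j)"
      by (simp add: B_def S_def)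
    show "G * bregman h gh \<mu> (lam 0) / (\<Sum>j\<le>k. eta j / theta j)
             = (theta k)\<^sup>2 * G * bregman h gh \<mu> (lam 0) / eta k"
    proof -
      have e: "(\<Sum>j\<le>k. eta j / theta j) = eta k / (theta k)\<^sup>2" using S_eq[of k] unfolding S_def .
      show ?thesis unfolding e using eta_pos[of k] theta_rng[of k] by (simp add: field_simps)
    qed
  qed
qed

end
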